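(* Let $p=2$, $\rho\ge 0$, $\mathbb{P}_\circ\in\mathscr{Q}_2$ with covariance $\Sigma_\circ\in\mathbb{S}_+^d$, and $s\equiv 0$. Then the set of global minimizers over $\mathcal{O}^{d,r}$ of $X\mapsto\varphi(X)$ coincides with the set of global minimizers over $\mathcal{O}^{d,r}$ of $X\mapsto\mathrm{tr}((I_d-XX^\top)\Sigma_\circ)$.
   Context: Let $d,r$ be integers with $1\le r<d$ and $\mathcal{O}^{d,r}=\{X\in\mathbb{R}^{d\times r}: X^\top X=I_r\}$. $\mathscr{Q}_2$ is the set of Borel probability distributions on $\mathbb{R}^d$ with finite second moment, and $\mathbb{W}_2$ is the type-2 Wasserstein distance $\mathbb{W}_2(\mathbb{P}_1,\mathbb{P}_2)=\inf_{\mathbb{Q}}\big(\mathbb{E}_{\mathbb{Q}}\|\xi_1-\xi_2\|_2^2\big)^{1/2}$ over couplings $\mathbb{Q}$ of $\mathbb{P}_1,\mathbb{P}_2$. For $X\in\mathcal{O}^{d,r}$, $\varphi(X)=\sup\{\mathbb{E}_{\mathbb{P}}\big[\|(I_d-XX^\top)(\xi-\mathbb{E}_{\mathbb{P}}[\xi])\|_2^2\big]:\mathbb{P}\in\mathscr{Q}_2,\ \mathbb{W}_2(\mathbb{P},\mathbb{P}_\circ)\le\rho\}$ (the inner problem of the Wasserstein distributionally robust PCA model). $\Sigma_\circ$ is the covariance matrix of $\xi$ under $\mathbb{P}_\circ$. *)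

theory Defs
  imports "HOL-Probability.Probability"
begin

definition stiefel :: "(real^'r^'d) set" where
  "stiefel = {X. transpose X ** X = mat 1}"

definition Q2 :: "(real^'d) measure set" where
  "Q2 = {P. prob_space P \<and> sets P = sets borel \<and> integrable P (\<lambda>x. (norm x)\<^sup>2)}"

definition couplings :: "(real^'d) measure \<Rightarrow> (real^'d) measure \<Rightarrow> ((real^'d) \<times> (real^'d)) measure set" where
  "couplings P1 P2 = {Q. prob_space Q \<and> sets Q = sets borel \<and>
       distr Q borel fst = P1 \<and> distr Q borel snd = P2}"

definition W2 :: "(real^'d) measure \<Rightarrow> (real^'d) measure \<Rightarrow> real" where
  "W2 P1 P2 = sqrt (Inf {(\<integral>z. (norm (fst z - snd z))\<^sup>2 \<partial>Q) | Q. Q \<in> couplings P1 P2})"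

definition mean :: "(real^'d) measure \<Rightarrow> real^'d" where
  "mean P = (\<integral>x. x \<partial>P)"

definition covariance :: "(real^'d) measure \<Rightarrow> real^'d^'d" where
  "covariance P = (\<chi> i j. \<integral>x. (x$i - mean P $ i) * (x$j - mean P $ j) \<partial>P)"

text \<open>Inner problem of the Wasserstein DR-PCA model (p = 2, s = 0).\<close>
definition phi :: "real \<Rightarrow> (real^'d) measure \<Rightarrow> real^'r^'d \<Rightarrow> real" where
  "phi \<rho> P0 X = Sup {(\<integral>\<xi>. (norm ((mat 1 - X ** transpose X) *v (\<xi> - mean P)))\<^sup>2 \<partial>P) | P.
                        P \<in> Q2 \<and> W2 P P0 \<le> \<rho>}"

end

theory Submission
  imports Defs
begin


definition projc :: "real^'r^'d \<Rightarrow> real^'d^'d" where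
  "projc X = mat 1 - X ** transpose X"

lemma inner_mat_left: "((A::real^'n^'m) *v x) \<bullet> y = x \<bullet> (transpose A *v y)"
  by (metis dot_lmul_matrix vector_transpose_matrix)

lemma transpose_diff': "transpose ((A::real^'n^'m) - B) = transpose A - transpose B"
  by (simp add: transpose_def vec_eq_iff)

lemma matrix_sub_ldistrib': "(A::real^'n^'m) ** (B - C) = A ** B - A ** C"
  by (simp add: matrix_matrix_mult_def vec_eq_iff sum_subtractf algebra_simps)

lemma matrix_sub_rdistrib': "((A::real^'n^'m) - B) ** C = A ** C - B ** C"
  by (simp add: matrix_matrix_mult_def vec_eq_iff sum_subtractf algebra_simps)

lemma projc_sym: "transpose (projc X) = projc X"
  unfolding projc_def
  by (metis matrix_transpose_mul transpose_diff' transpose_mat transpose_transpose)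

lemma projc_idem:
  assumes "X \<in> stiefel" shows "projc X ** projc X = projc X"
proof -
  have XX: "transpose X ** X = mat 1" using assms by (simp add: stiefel_def)
  have "X ** transpose X ** (X ** transpose X) = X ** transpose X"
    by (metis XX matrix_mul_assoc matrix_mul_rid)
  then show ?thesis unfolding projc_def
    by (simp add: matrix_sub_ldistrib' matrix_sub_rdistrib')
qed

lemma norm_add_sq: "(norm ((a::'a::real_inner) + b))\<^sup>2 = (norm a)\<^sup>2 + (norm b)\<^sup>2 + 2 * (a \<bullet> b)"
  by (simp add: power2_norm_eq_inner inner_add_left inner_add_right inner_commute)

lemma projc_proj: assumes "X \<in> stiefel"
  shows "projc X *v (projc X *v v) = projc X *v v"
  using projc_idem[OF assms] by (metis matrix_vector_mul_assoc)

lemma norm_projc_sq: assumes "X \<in> stiefel"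
  shows "(norm (projc X *v w))\<^sup>2 = w \<bullet> (projc X *v w)"
  by (metis assms inner_mat_left power2_norm_eq_inner projc_proj projc_sym)

lemma norm_projc_le: assumes "X \<in> stiefel"
  shows "norm (projc X *v v) \<le> norm v"
proof -
  let ?M = "projc X"
  have o: "(?M *v v) \<bullet> (v - ?M *v v) = 0"
    by (metis (no_types, lifting) assms cancel_comm_monoid_add_class.diff_cancel inner_mat_left
        inner_zero_right matrix_vector_mult_diff_distrib projc_proj projc_sym)
  have "(norm v)\<^sup>2 = (norm (?M *v v + (v - ?M *v v)))\<^sup>2" by simp
  also have "\<dots> = (norm (?M *v v))\<^sup>2 + (norm (v - ?M *v v))\<^sup>2"
    using o norm_add_sq[of "?M *v v" "v - ?M *v v"] by simp
  finally have "(norm (?M *v v))\<^sup>2 \<le> (norm v)\<^sup>2" by simp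
  then show ?thesis by (simp add: power2_le_iff_abs_le)
qed

lemma mat_axis: "((A::real^'n^'m) *v axis j 1) $ i = A $ i $ j"
  by (simp add: matrix_vector_mult_def axis_def if_distrib cong: if_cong)

lemma projc_fixed_unit:
  assumes "X \<in> stiefel" "CARD('r) < CARD('d)"
  shows "\<exists>u. norm u = 1 \<and> projc (X::real^'r^'d) *v u = u"
proof -
  let ?M = "projc X"
  have XX: "transpose X ** X = mat 1" using assms by (simp add: stiefel_def)
  have "trace ?M = real CARD('d) - real CARD('r)"
    unfolding projc_def by (simp add: trace_sub trace_I trace_mul_sym[of X] XX)
  then have "trace ?M \<noteq> 0" using assms(2) by simp
  then have "?M \<noteq> 0" by (auto simp: trace_def)
  have "\<exists>j. ?M *v axis j 1 \<noteq> 0"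
  proof (rule ccontr)
    assume "\<not> ?thesis"
    then have "\<forall>i j. ?M $ i $ j = 0" by (metis mat_axis zero_index)
    then have "?M = 0" by (simp add: vec_eq_iff)
    then show False using \<open>?M \<noteq> 0\<close> by simp
  qed
  then obtain j where j: "?M *v axis j 1 \<noteq> 0" by blast
  define w where "w = ?M *v axis j 1"
  have Mw: "?M *v w = w" unfolding w_def using projc_proj[OF assms(1)] .
  define u where "u = (1 / norm w) *\<^sub>R w"
  have "norm u = 1" using j unfolding u_def w_def by simp
  moreover have "?M *v u = u" unfolding u_def by (simp add: matrix_vector_mult_scaleR Mw)
  ultimately show ?thesis by blast
qed



lemma sq_int_bound:
  fixes h :: "'a \<Rightarrow> 'b::{banach,second_countable_topology}"
    and F :: "'a \<Rightarrow> 'c::{banach,second_countable_topology}"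
  assumes "prob_space \<Omega>" "integrable \<Omega> (\<lambda>\<omega>. (norm (h \<omega>))\<^sup>2)"
    and [measurable]: "F \<in> borel_measurable \<Omega>"
    and b: "\<And>\<omega>. \<omega> \<in> space \<Omega> \<Longrightarrow> norm (F \<omega>) \<le> a * norm (h \<omega>) + b" and "a \<ge> 0"
  shows "integrable \<Omega> (\<lambda>\<omega>. (norm (F \<omega>))\<^sup>2)"
proof (rule Bochner_Integration.integrable_bound[where f="\<lambda>\<omega>. 2 * a\<^sup>2 * (norm (h \<omega>))\<^sup>2 + 2 * b\<^sup>2"])
  interpret prob_space \<Omega> by fact
  show "integrable \<Omega> (\<lambda>\<omega>. 2 * a\<^sup>2 * (norm (h \<omega>))\<^sup>2 + 2 * b\<^sup>2)"
    using assms(2) by auto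
  show "(\<lambda>\<omega>. (norm (F \<omega>))\<^sup>2) \<in> borel_measurable \<Omega>" by measurable
  show "AE \<omega> in \<Omega>. norm ((norm (F \<omega>))\<^sup>2) \<le> norm (2 * a\<^sup>2 * (norm (h \<omega>))\<^sup>2 + 2 * b\<^sup>2)"
  proof (rule AE_I2)
    fix \<omega> assume w: "\<omega> \<in> space \<Omega>"
    define n where "n = norm (h \<omega>)"
    have n: "n \<ge> 0" unfolding n_def by simp
    have F0: "0 \<le> norm (F \<omega>)" by simp
    have "(norm (F \<omega>))\<^sup>2 \<le> (a * n + b)\<^sup>2"
      using b[OF w] F0 unfolding n_def by (intro power_mono) auto
    moreover have "(a * n + b)\<^sup>2 \<le> 2 * a\<^sup>2 * n\<^sup>2 + 2 * b\<^sup>2"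
    proof -
      have "0 \<le> (a * n - b)\<^sup>2" by simp
      then show ?thesis by (simp add: power2_sum power2_diff power_mult_distrib)
    qed
    ultimately show "norm ((norm (F \<omega>))\<^sup>2) \<le> norm (2 * a\<^sup>2 * (norm (h \<omega>))\<^sup>2 + 2 * b\<^sup>2)"
      unfolding n_def by simp
  qed
qed

lemma int_of_sq:
  fixes h :: "'a \<Rightarrow> 'b::{banach,second_countable_topology}"
  assumes "prob_space \<Omega>" "integrable \<Omega> (\<lambda>\<omega>. (norm (h \<omega>))\<^sup>2)"
    and [measurable]: "h \<in> borel_measurable \<Omega>"
  shows "integrable \<Omega> h"
proof (rule Bochner_Integration.integrable_bound[where f="\<lambda>\<omega>. 1 + (norm (h \<omega>))\<^sup>2"])
  interpret prob_space \<Omega> by fact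
  show "integrable \<Omega> (\<lambda>\<omega>. 1 + (norm (h \<omega>))\<^sup>2)" using assms(2) by auto
  show "AE \<omega> in \<Omega>. norm (h \<omega>) \<le> norm (1 + (norm (h \<omega>))\<^sup>2)"
  proof (rule AE_I2)
    fix \<omega> have "0 \<le> (norm (h \<omega>) - 1)\<^sup>2" by simp
    then have "2 * norm (h \<omega>) \<le> (norm (h \<omega>))\<^sup>2 + 1" by (simp add: power2_diff)
    then have "norm (h \<omega>) \<le> 1 + (norm (h \<omega>))\<^sup>2" using norm_ge_zero[of "h \<omega>"] by linarith
    then show "norm (h \<omega>) \<le> norm (1 + (norm (h \<omega>))\<^sup>2)" by simp
  qed
qed fact

lemma real_mink:
  fixes A B x :: real
  assumes "A \<ge> 0" "B \<ge> 0" and h: "\<And>l. l > 0 \<Longrightarrow> x \<le> (1 + l) * A + (1 + 1 / l) * B"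
  shows "x \<le> (sqrt A + sqrt B)\<^sup>2"
proof -
  define a where "a = sqrt A"
  define b where "b = sqrt B"
  have a: "a \<ge> 0" "A = a\<^sup>2" and b: "b \<ge> 0" "B = b\<^sup>2" using assms by (auto simp: a_def b_def)
  have key: "x \<le> (a + b)\<^sup>2 + e * (a + b)" if e: "e > 0" for e
  proof -
    define l where "l = (b + e) / (a + e)"
    have l: "l > 0" using a b e unfolding l_def by simp
    have 1: "a\<^sup>2 * l \<le> a * (b + e)"
    proof -
      have "a\<^sup>2 * l = a * (b + e) * (a / (a + e))" unfolding l_def using a b e
        by (simp add: power2_eq_square field_simps)
      also have "\<dots> \<le> a * (b + e) * 1"
        using a b e by (intro mult_left_mono) auto
      finally show ?thesis by simp
    qed
    have 2: "b\<^sup>2 * (1 / l) \<le> b * (a + e)"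
    proof -
      have "b\<^sup>2 * (1 / l) = b * (a + e) * (b / (b + e))" unfolding l_def using a b e
        by (simp add: power2_eq_square field_simps)
      also have "\<dots> \<le> b * (a + e) * 1"
        using a b e by (intro mult_left_mono) auto
      finally show ?thesis by simp
    qed
    have "x \<le> (1 + l) * A + (1 + 1 / l) * B" using h l by blast
    also have "\<dots> = a\<^sup>2 + b\<^sup>2 + a\<^sup>2 * l + b\<^sup>2 * (1 / l)" using a b by (simp add: algebra_simps)
    also have "\<dots> \<le> (a + b)\<^sup>2 + e * (a + b)" using 1 2 by (simp add: power2_eq_square algebra_simps)
    finally show ?thesis .
  qed
  have "x \<le> (a + b)\<^sup>2"
  proof (cases "a + b = 0")
    case True then show ?thesis using key[of 1] by simp
  next
    case False
    then have ab: "a + b > 0" using a b by simp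
    show ?thesis
    proof (rule field_le_epsilon)
      fix e :: real assume "e > 0"
      then show "x \<le> (a + b)\<^sup>2 + e" using key[of "e / (a + b)"] ab by simp
    qed
  qed
  then show ?thesis by (simp add: a_def b_def)
qed



lemma pt_mink:
  fixes x y :: "'b::real_normed_vector"
  assumes l: "l > 0"
  shows "(norm (x + y))\<^sup>2 \<le> (1 + l) * (norm x)\<^sup>2 + (1 + 1 / l) * (norm y)\<^sup>2"
proof -
  define p where "p = norm x"
  define q where "q = norm y"
  have pq: "p \<ge> 0" "q \<ge> 0" unfolding p_def q_def by auto
  have "(norm (x + y))\<^sup>2 \<le> (p + q)\<^sup>2"
    unfolding p_def q_def by (intro power_mono norm_triangle_ineq) auto
  moreover have "2 * p * q \<le> l * p\<^sup>2 + q\<^sup>2 / l"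
  proof -
    have "0 \<le> (l * p - q)\<^sup>2" by simp
    then have "2 * l * p * q \<le> l\<^sup>2 * p\<^sup>2 + q\<^sup>2" by (simp add: power2_diff power_mult_distrib)
    then have "(2 * p * q) * l \<le> (l * p\<^sup>2 + q\<^sup>2 / l) * l" using l
      by (simp add: algebra_simps power2_eq_square)
    then show ?thesis using l by simp
  qed
  ultimately show ?thesis unfolding p_def[symmetric] q_def[symmetric]
    by (simp add: power2_sum algebra_simps)
qed

lemma mink_int:
  fixes f g :: "'a \<Rightarrow> 'b::euclidean_space"
  assumes P: "prob_space \<Omega>" and [measurable]: "f \<in> borel_measurable \<Omega>" "g \<in> borel_measurable \<Omega>"
    and fi: "integrable \<Omega> (\<lambda>\<omega>. (norm (f \<omega>))\<^sup>2)" and gi: "integrable \<Omega> (\<lambda>\<omega>. (norm (g \<omega>))\<^sup>2)"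
  shows "(\<integral>\<omega>. (norm (f \<omega> + g \<omega>))\<^sup>2 \<partial>\<Omega>) \<le>
           (sqrt (\<integral>\<omega>. (norm (f \<omega>))\<^sup>2 \<partial>\<Omega>) + sqrt (\<integral>\<omega>. (norm (g \<omega>))\<^sup>2 \<partial>\<Omega>))\<^sup>2"
proof (rule real_mink)
  have pi: "integrable \<Omega> (\<lambda>\<omega>. (norm (f \<omega>, g \<omega>))\<^sup>2)"
    using fi gi by (simp add: norm_Pair)
  have si: "integrable \<Omega> (\<lambda>\<omega>. (norm (f \<omega> + g \<omega>))\<^sup>2)"
  proof (rule sq_int_bound[OF P pi, where a=2 and b=0])
    fix \<omega>
    have "norm (f \<omega> + g \<omega>) \<le> norm (f \<omega>) + norm (g \<omega>)" by (rule norm_triangle_ineq)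
    also have "\<dots> \<le> 2 * norm (f \<omega>, g \<omega>)"
      using norm_fst_le[of "f \<omega>" "g \<omega>"] norm_snd_le[of "g \<omega>" "f \<omega>"] by simp
    finally show "norm (f \<omega> + g \<omega>) \<le> 2 * norm (f \<omega>, g \<omega>) + 0" by simp
  qed (auto)
  show "0 \<le> (\<integral>\<omega>. (norm (f \<omega>))\<^sup>2 \<partial>\<Omega>)" by (rule integral_nonneg_AE) auto
  show "0 \<le> (\<integral>\<omega>. (norm (g \<omega>))\<^sup>2 \<partial>\<Omega>)" by (rule integral_nonneg_AE) auto
  fix l :: real assume l: "l > 0"
  have "(\<integral>\<omega>. (norm (f \<omega> + g \<omega>))\<^sup>2 \<partial>\<Omega>) \<le>
        (\<integral>\<omega>. (1 + l) * (norm (f \<omega>))\<^sup>2 + (1 + 1 / l) * (norm (g \<omega>))\<^sup>2 \<partial>\<Omega>)"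
    using si fi gi pt_mink[OF l] by (intro integral_mono) auto
  also have "\<dots> = (1 + l) * (\<integral>\<omega>. (norm (f \<omega>))\<^sup>2 \<partial>\<Omega>) + (1 + 1 / l) * (\<integral>\<omega>. (norm (g \<omega>))\<^sup>2 \<partial>\<Omega>)"
    using fi gi by simp
  finally show "(\<integral>\<omega>. (norm (f \<omega> + g \<omega>))\<^sup>2 \<partial>\<Omega>) \<le>
        (1 + l) * (\<integral>\<omega>. (norm (f \<omega>))\<^sup>2 \<partial>\<Omega>) + (1 + 1 / l) * (\<integral>\<omega>. (norm (g \<omega>))\<^sup>2 \<partial>\<Omega>)" .
qed

lemma sq_int_shift:
  fixes k :: "'a \<Rightarrow> 'b::euclidean_space"
  assumes P: "prob_space \<Omega>" and [measurable]: "k \<in> borel_measurable \<Omega>"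
    and ki: "integrable \<Omega> (\<lambda>\<omega>. (norm (k \<omega>))\<^sup>2)"
  shows "integrable \<Omega> (\<lambda>\<omega>. (norm (k \<omega> - c))\<^sup>2)"
  by (rule sq_int_bound[OF P ki, where a=1 and b="norm c"])
     (auto intro: order.trans[OF norm_triangle_ineq4])

lemma var_min:
  fixes k :: "'a \<Rightarrow> 'b::euclidean_space"
  assumes P: "prob_space \<Omega>" and [measurable]: "k \<in> borel_measurable \<Omega>"
    and ki: "integrable \<Omega> (\<lambda>\<omega>. (norm (k \<omega>))\<^sup>2)"
  shows "(\<integral>\<omega>. (norm (k \<omega> - (\<integral>\<omega>. k \<omega> \<partial>\<Omega>)))\<^sup>2 \<partial>\<Omega>) \<le> (\<integral>\<omega>. (norm (k \<omega> - c))\<^sup>2 \<partial>\<Omega>)"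
proof -
  interpret prob_space \<Omega> by fact
  define m where "m = (\<integral>\<omega>. k \<omega> \<partial>\<Omega>)"
  have k1: "integrable \<Omega> k" by (rule int_of_sq[OF P ki]) simp
  have km: "integrable \<Omega> (\<lambda>\<omega>. k \<omega> - m)" using k1 by simp
  have i1: "integrable \<Omega> (\<lambda>\<omega>. (norm (k \<omega> - m))\<^sup>2)" by (rule sq_int_shift[OF P _ ki]) simp
  have i3: "integrable \<Omega> (\<lambda>\<omega>. (k \<omega> - m) \<bullet> (m - c))" using km by simp
  have int0: "(\<integral>\<omega>. (k \<omega> - m) \<bullet> (m - c) \<partial>\<Omega>) = 0"
  proof -
    have "(\<integral>\<omega>. (k \<omega> - m) \<bullet> (m - c) \<partial>\<Omega>) = (\<integral>\<omega>. (k \<omega> - m) \<partial>\<Omega>) \<bullet> (m - c)"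
      using km by simp
    also have "(\<integral>\<omega>. (k \<omega> - m) \<partial>\<Omega>) = 0" using k1 by (simp add: m_def prob_space)
    finally show ?thesis by simp
  qed
  have "(\<integral>\<omega>. (norm (k \<omega> - c))\<^sup>2 \<partial>\<Omega>) =
        (\<integral>\<omega>. (norm (k \<omega> - m))\<^sup>2 + (norm (m - c))\<^sup>2 + 2 * ((k \<omega> - m) \<bullet> (m - c)) \<partial>\<Omega>)"
    by (rule Bochner_Integration.integral_cong[OF refl])
       (metis norm_add_sq diff_add_cancel add_diff_eq)
  also have "\<dots> = (\<integral>\<omega>. (norm (k \<omega> - m))\<^sup>2 \<partial>\<Omega>) + (norm (m - c))\<^sup>2"
    using i1 i3 int0 by (simp add: prob_space)
  finally show ?thesis unfolding m_def[symmetric] by simp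
qed



lemma mv_borel[measurable]: "(\<lambda>v. (A::real^'n^'m) *v v) \<in> borel_measurable borel"
  by (intro borel_measurable_continuous_onI linear_continuous_on linear_conv_bounded_linear[THEN iffD1]) simp

lemma mv_borel_raw[measurable (raw)]:
  "f \<in> borel_measurable M \<Longrightarrow> (\<lambda>x. (A::real^'n^'m) *v f x) \<in> borel_measurable M"
  using measurable_compose[OF _ mv_borel] by blast

lemma fst_borel[measurable]: "fst \<in> borel_measurable (borel :: ('a::second_countable_topology \<times> 'b::second_countable_topology) measure)"
  by (intro borel_measurable_continuous_onI continuous_on_fst continuous_on_id)

lemma snd_borel[measurable]: "snd \<in> borel_measurable (borel :: ('a::second_countable_topology \<times> 'b::second_countable_topology) measure)"
  by (intro borel_measurable_continuous_onI continuous_on_snd continuous_on_id)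

lemma coupling_distr:
  fixes F G :: "'a \<Rightarrow> real^'d"
  assumes P: "prob_space \<Omega>" and [measurable]: "F \<in> borel_measurable \<Omega>" "G \<in> borel_measurable \<Omega>"
  shows "distr \<Omega> borel (\<lambda>\<omega>. (F \<omega>, G \<omega>)) \<in> couplings (distr \<Omega> borel F) (distr \<Omega> borel G)"
    and "(\<integral>z. (norm (fst z - snd z))\<^sup>2 \<partial>distr \<Omega> borel (\<lambda>\<omega>. (F \<omega>, G \<omega>)))
           = (\<integral>\<omega>. (norm (F \<omega> - G \<omega>))\<^sup>2 \<partial>\<Omega>)"
proof -
  interpret prob_space \<Omega> by fact
  let ?Q = "distr \<Omega> borel (\<lambda>\<omega>. (F \<omega>, G \<omega>))"
  have "distr ?Q borel fst = distr \<Omega> borel (fst \<circ> (\<lambda>\<omega>. (F \<omega>, G \<omega>)))"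
    by (rule distr_distr) auto
  moreover have "distr ?Q borel snd = distr \<Omega> borel (snd \<circ> (\<lambda>\<omega>. (F \<omega>, G \<omega>)))"
    by (rule distr_distr) auto
  ultimately show "?Q \<in> couplings (distr \<Omega> borel F) (distr \<Omega> borel G)"
    unfolding couplings_def by (auto simp: o_def intro!: prob_space_distr)
  show "(\<integral>z. (norm (fst z - snd z))\<^sup>2 \<partial>?Q) = (\<integral>\<omega>. (norm (F \<omega> - G \<omega>))\<^sup>2 \<partial>\<Omega>)"
    by (subst integral_distr) auto
qed

lemma W2_le:
  assumes "Q \<in> couplings P1 P2"
  shows "W2 P1 P2 \<le> sqrt (\<integral>z. (norm (fst z - snd z))\<^sup>2 \<partial>Q)"
proof -
  let ?S = "{(\<integral>z. (norm (fst z - snd z))\<^sup>2 \<partial>Q) | Q. Q \<in> couplings P1 P2}"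
  have "bdd_below ?S"
    by (rule bdd_belowI[where m=0]) (auto intro!: integral_nonneg_AE)
  then have "Inf ?S \<le> (\<integral>z. (norm (fst z - snd z))\<^sup>2 \<partial>Q)"
    using assms by (intro cInf_lower) auto
  then show ?thesis unfolding W2_def by simp
qed

lemma Q2D:
  assumes "P \<in> Q2"
  shows "prob_space P" "sets P = sets borel" "integrable P (\<lambda>x. (norm x)\<^sup>2)"
  using assms by (auto simp: Q2_def)

lemma distr_Q2:
  fixes F :: "'a \<Rightarrow> real^'d"
  assumes P: "prob_space \<Omega>" and [measurable]: "F \<in> borel_measurable \<Omega>"
    and "integrable \<Omega> (\<lambda>\<omega>. (norm (F \<omega>))\<^sup>2)"
  shows "distr \<Omega> borel F \<in> Q2"
proof -
  interpret prob_space \<Omega> by fact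
  show ?thesis unfolding Q2_def using assms(3)
    by (auto intro!: prob_space_distr simp: integrable_distr_eq)
qed

lemma couplings_nonempty:
  assumes "P1 \<in> Q2" "P2 \<in> Q2"
  shows "couplings P1 P2 \<noteq> {}"
proof -
  interpret p1: prob_space P1 using Q2D[OF assms(1)] by simp
  interpret p2: prob_space P2 using Q2D[OF assms(2)] by simp
  interpret pair_sigma_finite P1 P2 by unfold_locales
  let ?\<Omega> = "P1 \<Otimes>\<^sub>M P2"
  have P: "prob_space ?\<Omega>" by (rule prob_space_pair) unfold_locales
  have s1[measurable_cong]: "sets P1 = sets borel" and s2[measurable_cong]: "sets P2 = sets borel"
    using Q2D assms by auto
  have "measurable ?\<Omega> P1 = measurable ?\<Omega> borel" by (rule measurable_cong_sets) (simp_all add: s1)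
  then have m1: "fst \<in> borel_measurable ?\<Omega>" using measurable_fst by metis
  have "measurable ?\<Omega> P2 = measurable ?\<Omega> borel" by (rule measurable_cong_sets) (simp_all add: s2)
  then have m2: "snd \<in> borel_measurable ?\<Omega>" using measurable_snd by metis
  have d1: "distr ?\<Omega> borel fst = P1"
  proof -
    have "distr ?\<Omega> borel fst = distr ?\<Omega> P1 fst" by (rule distr_cong[OF refl]) (simp_all add: s1)
    also have "\<dots> = P1" by (rule p2.distr_pair_fst)
    finally show ?thesis .
  qed
  have d2: "distr ?\<Omega> borel snd = P2"
  proof -
    have "distr ?\<Omega> borel snd = distr ?\<Omega> P2 snd" by (rule distr_cong[OF refl]) (simp_all add: s2)
    also have "\<dots> = distr (distr (P2 \<Otimes>\<^sub>M P1) ?\<Omega> (\<lambda>(x, y). (y, x))) P2 snd"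
      by (rule arg_cong[where f="\<lambda>N. distr N P2 snd"], rule distr_pair_swap)
    also have "\<dots> = distr (P2 \<Otimes>\<^sub>M P1) P2 (snd \<circ> (\<lambda>(x, y). (y, x)))"
      by (rule distr_distr[OF measurable_snd measurable_pair_swap'])
    also have "\<dots> = distr (P2 \<Otimes>\<^sub>M P1) P2 fst"
      by (rule distr_cong[OF refl refl]) (simp add: split_beta)
    also have "\<dots> = P2" by (rule p1.distr_pair_fst)
    finally show ?thesis .
  qed
  have "distr ?\<Omega> borel (\<lambda>\<omega>. (fst \<omega>, snd \<omega>)) \<in> couplings (distr ?\<Omega> borel fst) (distr ?\<Omega> borel snd)"
    by (rule coupling_distr(1)[OF P m1 m2])
  then show ?thesis using d1 d2 by auto
qed

lemma W2_approx:
  assumes "P1 \<in> Q2" "P2 \<in> Q2" "W2 P1 P2 \<le> \<rho>" "e > 0" "\<rho> \<ge> 0"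
  shows "\<exists>Q \<in> couplings P1 P2. (\<integral>z. (norm (fst z - snd z))\<^sup>2 \<partial>Q) < \<rho>\<^sup>2 + e"
proof -
  let ?S = "{(\<integral>z. (norm (fst z - snd z))\<^sup>2 \<partial>Q) | Q. Q \<in> couplings P1 P2}"
  have bb: "bdd_below ?S"
    by (rule bdd_belowI[where m=0]) (auto intro!: integral_nonneg_AE)
  have ne: "?S \<noteq> {}" using couplings_nonempty[OF assms(1,2)] by auto
  have "Inf ?S \<le> \<rho>\<^sup>2" using assms(3) unfolding W2_def by (rule sqrt_le_D)
  then have "Inf ?S < \<rho>\<^sup>2 + e" using assms(4) by simp
  then show ?thesis using cInf_less_iff[OF ne bb] by auto
qed



lemma le_sq_limit:
  fixes W c :: real
  assumes c: "c \<ge> 0" and h: "\<And>s. s > 0 \<Longrightarrow> W \<le> (c + s)\<^sup>2"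
  shows "W \<le> c\<^sup>2"
proof (rule ccontr)
  assume "\<not> W \<le> c\<^sup>2"
  then have W: "W > c\<^sup>2" by simp
  then have "sqrt W > c" using c by (metis real_less_rsqrt)
  define s where "s = (sqrt W - c) / 2"
  have s: "s > 0" using \<open>sqrt W > c\<close> by (simp add: s_def)
  have "c + s < sqrt W" using \<open>sqrt W > c\<close> by (simp add: s_def field_simps)
  then have "(c + s)\<^sup>2 < (sqrt W)\<^sup>2" using c s by (intro power_strict_mono) auto
  also have "\<dots> = W" using W zero_le_power2[of c] by (intro real_sqrt_pow2) linarith
  finally show False using h[OF s] by simp
qed

lemma bl_mv: "bounded_linear (\<lambda>v. (A::real^'n^'m) *v v)"
  by (simp add: linear_conv_bounded_linear[symmetric])

lemma value_upper:
  fixes X :: "real^'r^'d" and P P0 :: "(real^'d) measure"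
  assumes X: "X \<in> stiefel" and P0: "P0 \<in> Q2" and PQ: "P \<in> Q2" and W: "W2 P P0 \<le> \<rho>" and r: "\<rho> \<ge> 0"
  shows "(\<integral>x. (norm (projc X *v (x - mean P)))\<^sup>2 \<partial>P)
          \<le> (sqrt (\<integral>x. (norm (projc X *v (x - mean P0)))\<^sup>2 \<partial>P0) + \<rho>)\<^sup>2"
proof -
  let ?M = "projc X"
  define m0 where "m0 = mean P0"
  define V0 where "V0 = (\<integral>x. (norm (?M *v (x - m0)))\<^sup>2 \<partial>P0)"
  interpret prob_space P using Q2D[OF PQ] by simp
  have sP[measurable_cong]: "sets P = sets borel" using Q2D[OF PQ] by simp
  have Pi: "integrable P (\<lambda>x. (norm x)\<^sup>2)" using Q2D[OF PQ] by simp
  have xi: "integrable P (\<lambda>x. x)" by (rule int_of_sq[OF prob_space_axioms Pi]) simp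
  have ki: "integrable P (\<lambda>x. (norm (?M *v x))\<^sup>2)"
    by (rule sq_int_bound[OF prob_space_axioms Pi, where a=1 and b=0]) (auto intro: norm_projc_le[OF X])
  have ik: "(\<integral>x. ?M *v x \<partial>P) = ?M *v mean P"
    unfolding mean_def by (rule integral_bounded_linear[OF bl_mv xi])
  define Wv where "Wv = (\<integral>x. (norm (?M *v (x - m0)))\<^sup>2 \<partial>P)"
  have "(\<integral>x. (norm (?M *v (x - mean P)))\<^sup>2 \<partial>P) = (\<integral>x. (norm (?M *v x - (\<integral>x. ?M *v x \<partial>P)))\<^sup>2 \<partial>P)"
    by (simp add: ik matrix_vector_mult_diff_distrib)
  also have "\<dots> \<le> (\<integral>x. (norm (?M *v x - ?M *v m0))\<^sup>2 \<partial>P)"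
    by (rule var_min[OF prob_space_axioms _ ki]) simp
  also have "\<dots> = Wv" by (simp add: Wv_def matrix_vector_mult_diff_distrib)
  finally have v1: "(\<integral>x. (norm (?M *v (x - mean P)))\<^sup>2 \<partial>P) \<le> Wv" .
  have V0nn: "V0 \<ge> 0" unfolding V0_def by (rule integral_nonneg_AE) auto
  have "Wv \<le> (sqrt V0 + \<rho>)\<^sup>2"
  proof (rule le_sq_limit)
    show "sqrt V0 + \<rho> \<ge> 0" using r V0nn by simp
    fix s :: real assume s: "s > 0"
    obtain Q where Q: "Q \<in> couplings P P0" and cQ: "(\<integral>z. (norm (fst z - snd z))\<^sup>2 \<partial>Q) < \<rho>\<^sup>2 + s\<^sup>2"
      using W2_approx[OF PQ P0 W _ r, of "s\<^sup>2"] s by auto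
    have Qp: "prob_space Q" and sQ[measurable_cong]: "sets Q = sets borel"
      and d1: "distr Q borel fst = P" and d2: "distr Q borel snd = P0"
      using Q unfolding couplings_def by auto
    have sP0[measurable_cong]: "sets P0 = sets borel" using Q2D[OF P0] by simp
    have fm: "fst \<in> borel_measurable Q" and sm: "snd \<in> borel_measurable Q" by auto
    have i1: "integrable Q (\<lambda>z. (norm (fst z))\<^sup>2)"
      using Pi d1 integrable_distr_eq[OF fm, of "\<lambda>x. (norm x)\<^sup>2"] by simp
    have i2: "integrable Q (\<lambda>z. (norm (snd z))\<^sup>2)"
      using Q2D(3)[OF P0] d2 integrable_distr_eq[OF sm, of "\<lambda>x. (norm x)\<^sup>2"] by simp
    have iz: "integrable Q (\<lambda>z. (norm z)\<^sup>2)"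
    proof -
      have eq: "(\<lambda>z. (norm (fst z))\<^sup>2 + (norm (snd z))\<^sup>2) = (\<lambda>z. (norm z)\<^sup>2)"
        by (rule ext, case_tac z) (simp add: norm_Pair)
      have "integrable Q (\<lambda>z. (norm (fst z))\<^sup>2 + (norm (snd z))\<^sup>2)"
        using i1 i2 by (rule Bochner_Integration.integrable_add)
      then show ?thesis unfolding eq .
    qed
    define f where "f = (\<lambda>z::(real^'d)\<times>(real^'d). ?M *v (fst z - snd z))"
    define g where "g = (\<lambda>z::(real^'d)\<times>(real^'d). ?M *v (snd z - m0))"
    have [measurable]: "f \<in> borel_measurable Q" "g \<in> borel_measurable Q" unfolding f_def g_def by auto
    have fi: "integrable Q (\<lambda>z. (norm (f z))\<^sup>2)"
    proof (rule sq_int_bound[OF Qp iz, where a=2 and b=0])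
      fix z :: "(real^'d) \<times> (real^'d)"
      have "norm (f z) \<le> norm (fst z - snd z)" unfolding f_def by (rule norm_projc_le[OF X])
      also have "\<dots> \<le> norm (fst z) + norm (snd z)" by (rule norm_triangle_ineq4)
      also have "\<dots> \<le> 2 * norm z" using norm_fst_le[of "fst z" "snd z"] norm_snd_le[of "snd z" "fst z"] by simp
      finally show "norm (f z) \<le> 2 * norm z + 0" by simp
    qed auto
    have gi: "integrable Q (\<lambda>z. (norm (g z))\<^sup>2)"
    proof (rule sq_int_bound[OF Qp iz, where a=1 and b="norm m0"])
      fix z :: "(real^'d) \<times> (real^'d)"
      have "norm (g z) \<le> norm (snd z - m0)" unfolding g_def by (rule norm_projc_le[OF X])
      also have "\<dots> \<le> norm (snd z) + norm m0" by (rule norm_triangle_ineq4)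
      also have "\<dots> \<le> 1 * norm z + norm m0" using norm_snd_le[of "snd z" "fst z"] by simp
      finally show "norm (g z) \<le> 1 * norm z + norm m0" .
    qed auto
    have ci: "integrable Q (\<lambda>z. (norm (fst z - snd z))\<^sup>2)"
    proof (rule sq_int_bound[OF Qp iz, where a=2 and b=0])
      fix z :: "(real^'d) \<times> (real^'d)"
      have "norm (fst z - snd z) \<le> norm (fst z) + norm (snd z)" by (rule norm_triangle_ineq4)
      also have "\<dots> \<le> 2 * norm z" using norm_fst_le[of "fst z" "snd z"] norm_snd_le[of "snd z" "fst z"] by simp
      finally show "norm (fst z - snd z) \<le> 2 * norm z + 0" by simp
    qed auto
    have WvQ: "Wv = (\<integral>z. (norm (f z + g z))\<^sup>2 \<partial>Q)"
    proof -
      have "Wv = (\<integral>x. (norm (?M *v (x - m0)))\<^sup>2 \<partial>distr Q borel fst)" unfolding Wv_def d1 ..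
      also have "\<dots> = (\<integral>z. (norm (?M *v (fst z - m0)))\<^sup>2 \<partial>Q)" by (rule integral_distr[OF fm]) simp
      also have "\<dots> = (\<integral>z. (norm (f z + g z))\<^sup>2 \<partial>Q)"
        unfolding f_def g_def by (simp add: matrix_vector_mult_diff_distrib)
      finally show ?thesis .
    qed
    have gV: "(\<integral>z. (norm (g z))\<^sup>2 \<partial>Q) = V0"
    proof -
      have "V0 = (\<integral>x. (norm (?M *v (x - m0)))\<^sup>2 \<partial>distr Q borel snd)" unfolding V0_def d2 ..
      also have "\<dots> = (\<integral>z. (norm (g z))\<^sup>2 \<partial>Q)" unfolding g_def by (rule integral_distr[OF sm]) simp
      finally show ?thesis by simp
    qed
    have "(\<integral>z. (norm (f z))\<^sup>2 \<partial>Q) \<le> (\<integral>z. (norm (fst z - snd z))\<^sup>2 \<partial>Q)"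
      using fi ci by (intro integral_mono) (auto simp: f_def intro: power_mono norm_projc_le[OF X])
    also have "\<dots> \<le> (\<rho> + s)\<^sup>2"
    proof -
      have "0 \<le> 2 * \<rho> * s" using r s by simp
      then show ?thesis using cQ unfolding power2_sum by linarith
    qed
    finally have "sqrt (\<integral>z. (norm (f z))\<^sup>2 \<partial>Q) \<le> \<rho> + s"
      using r s by (simp add: real_sqrt_le_iff')
    then have sq: "sqrt (\<integral>z. (norm (f z))\<^sup>2 \<partial>Q) + sqrt V0 \<le> sqrt V0 + \<rho> + s" by simp
    have "Wv \<le> (sqrt (\<integral>z. (norm (f z))\<^sup>2 \<partial>Q) + sqrt (\<integral>z. (norm (g z))\<^sup>2 \<partial>Q))\<^sup>2"
      unfolding WvQ by (rule mink_int[OF Qp _ _ fi gi]) auto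
    also have "\<dots> \<le> (sqrt V0 + \<rho> + s)\<^sup>2"
    proof -
      have "0 \<le> (\<integral>z. (norm (f z))\<^sup>2 \<partial>Q)" by (rule integral_nonneg_AE) auto
      then show ?thesis unfolding gV using V0nn by (intro power_mono[OF sq]) auto
    qed
    finally show "Wv \<le> (sqrt V0 + \<rho> + s)\<^sup>2" .
  qed
  with v1 show ?thesis unfolding V0_def m0_def by simp
qed



lemma distr_snd_pair:
  assumes "prob_space M1" "prob_space M2"
  shows "distr (M1 \<Otimes>\<^sub>M M2) M2 snd = M2"
proof -
  interpret p1: prob_space M1 by fact
  interpret p2: prob_space M2 by fact
  interpret pair_sigma_finite M1 M2 by unfold_locales
  have "distr (M1 \<Otimes>\<^sub>M M2) M2 snd = distr (distr (M2 \<Otimes>\<^sub>M M1) (M1 \<Otimes>\<^sub>M M2) (\<lambda>(x, y). (y, x))) M2 snd"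
    by (rule arg_cong[where f="\<lambda>N. distr N M2 snd"], rule distr_pair_swap)
  also have "\<dots> = distr (M2 \<Otimes>\<^sub>M M1) M2 (snd \<circ> (\<lambda>(x, y). (y, x)))"
    by (rule distr_distr[OF measurable_snd measurable_pair_swap'])
  also have "\<dots> = distr (M2 \<Otimes>\<^sub>M M1) M2 fst"
    by (rule distr_cong[OF refl refl]) (simp add: split_beta)
  also have "\<dots> = M2" by (rule p1.distr_pair_fst)
  finally show ?thesis .
qed

lemma case_pos:
  fixes X :: "real^'r^'d" and P0 :: "(real^'d) measure"
  assumes X: "X \<in> stiefel" and P0: "P0 \<in> Q2" and r: "\<rho> \<ge> 0"
    and V0: "(\<integral>x. (norm (projc X *v (x - mean P0)))\<^sup>2 \<partial>P0) > 0"
  shows "\<exists>P \<in> Q2. W2 P P0 \<le> \<rho> \<and> (\<integral>x. (norm (projc X *v (x - mean P)))\<^sup>2 \<partial>P)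
          = (sqrt (\<integral>x. (norm (projc X *v (x - mean P0)))\<^sup>2 \<partial>P0) + \<rho>)\<^sup>2"
proof -
  let ?M = "projc X"
  define m0 where "m0 = mean P0"
  define V where "V = (\<integral>x. (norm (?M *v (x - m0)))\<^sup>2 \<partial>P0)"
  have Vp: "V > 0" using V0 unfolding V_def m0_def .
  define c where "c = \<rho> / sqrt V"
  have c0: "c \<ge> 0" using r Vp by (simp add: c_def)
  have cV: "c * sqrt V = \<rho>" using Vp by (simp add: c_def)
  interpret prob_space P0 using Q2D[OF P0] by simp
  have sP[measurable_cong]: "sets P0 = sets borel" using Q2D[OF P0] by simp
  have Pi: "integrable P0 (\<lambda>x. (norm x)\<^sup>2)" using Q2D[OF P0] by simp
  have xi: "integrable P0 (\<lambda>x. x)" by (rule int_of_sq[OF prob_space_axioms Pi]) simp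
  have vi: "integrable P0 (\<lambda>x. (norm (?M *v (x - m0)))\<^sup>2)"
  proof (rule sq_int_bound[OF prob_space_axioms Pi, where a=1 and b="norm m0"])
    fix x :: "real^'d"
    show "norm (?M *v (x - m0)) \<le> 1 * norm x + norm m0"
      using norm_projc_le[OF X, of "x - m0"] norm_triangle_ineq4[of x m0] by simp
  qed auto
  define F where "F = (\<lambda>x::real^'d. x + c *\<^sub>R (?M *v (x - m0)))"
  have Fm[measurable]: "F \<in> borel_measurable P0" unfolding F_def by auto
  have idm[measurable]: "(\<lambda>x::real^'d. x) \<in> borel_measurable P0" by auto
  have Fi: "integrable P0 (\<lambda>x. (norm (F x))\<^sup>2)"
  proof (rule sq_int_bound[OF prob_space_axioms Pi, where a="1 + c" and b="c * norm m0"])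
    fix x :: "real^'d"
    have "norm (F x) \<le> norm x + c * norm (?M *v (x - m0))"
      unfolding F_def using c0 by (metis norm_scaleR abs_of_nonneg norm_triangle_ineq)
    also have "\<dots> \<le> norm x + c * (norm x + norm m0)"
      using c0 norm_projc_le[OF X, of "x - m0"] norm_triangle_ineq4[of x m0]
      by (intro add_left_mono mult_left_mono) auto
    finally show "norm (F x) \<le> (1 + c) * norm x + c * norm m0" by (simp add: algebra_simps)
  qed (use c0 in auto)
  define P where "P = distr P0 borel F"
  have PQ2: "P \<in> Q2" unfolding P_def by (rule distr_Q2[OF prob_space_axioms Fm Fi])
  have did: "distr P0 borel (\<lambda>x. x) = P0" by (rule distr_id2) (simp add: sP)
  have cpl: "distr P0 borel (\<lambda>x. (F x, x)) \<in> couplings P P0"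
    using coupling_distr(1)[OF prob_space_axioms Fm idm] unfolding P_def did .
  have cost: "(\<integral>z. (norm (fst z - snd z))\<^sup>2 \<partial>distr P0 borel (\<lambda>x. (F x, x))) = \<rho>\<^sup>2"
  proof -
    have "(\<integral>z. (norm (fst z - snd z))\<^sup>2 \<partial>distr P0 borel (\<lambda>x. (F x, x)))
          = (\<integral>x. (norm (F x - x))\<^sup>2 \<partial>P0)"
      by (rule coupling_distr(2)[OF prob_space_axioms Fm idm])
    also have "\<dots> = (\<integral>x. c\<^sup>2 * (norm (?M *v (x - m0)))\<^sup>2 \<partial>P0)"
      unfolding F_def by (simp add: power_mult_distrib)
    also have "\<dots> = c\<^sup>2 * V" unfolding V_def by simp
    also have "\<dots> = (c * sqrt V)\<^sup>2" using Vp by (simp add: power_mult_distrib)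
    finally show ?thesis using cV by simp
  qed
  have W: "W2 P P0 \<le> \<rho>" using W2_le[OF cpl] cost r by simp
  have mP: "mean P = m0"
  proof -
    have "mean P = (\<integral>x. F x \<partial>P0)" unfolding mean_def P_def
      by (rule integral_distr[OF Fm]) simp
    also have "\<dots> = (\<integral>x. x \<partial>P0) + c *\<^sub>R (?M *v ((\<integral>x. x \<partial>P0) - m0))"
    proof -
      have i2: "integrable P0 (\<lambda>x. x - m0)" using xi by simp
      have "(\<integral>x. ?M *v (x - m0) \<partial>P0) = ?M *v (\<integral>x. x - m0 \<partial>P0)"
        by (rule integral_bounded_linear[OF bl_mv i2])
      also have "(\<integral>x. x - m0 \<partial>P0) = (\<integral>x. x \<partial>P0) - m0" using xi by (simp add: prob_space)
      finally have e: "(\<integral>x. ?M *v (x - m0) \<partial>P0) = ?M *v ((\<integral>x. x \<partial>P0) - m0)" .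
      have i3: "integrable P0 (\<lambda>x. ?M *v (x - m0))"
        by (rule integrable_bounded_linear[OF bl_mv i2])
      show ?thesis unfolding F_def using xi i3 e by simp
    qed
    also have "\<dots> = m0" by (simp add: m0_def mean_def)
    finally show ?thesis .
  qed
  have val: "(\<integral>x. (norm (?M *v (x - mean P)))\<^sup>2 \<partial>P) = (sqrt V + \<rho>)\<^sup>2"
  proof -
    have "(\<integral>x. (norm (?M *v (x - mean P)))\<^sup>2 \<partial>P) = (\<integral>x. (norm (?M *v (F x - m0)))\<^sup>2 \<partial>P0)"
      unfolding mP unfolding P_def by (rule integral_distr[OF Fm]) simp
    also have "\<dots> = (\<integral>x. (1 + c)\<^sup>2 * (norm (?M *v (x - m0)))\<^sup>2 \<partial>P0)"
    proof (rule Bochner_Integration.integral_cong[OF refl])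
      fix x :: "real^'d"
      have "?M *v (F x - m0) = (1 + c) *\<^sub>R (?M *v (x - m0))"
        unfolding F_def using projc_proj[OF X, of x] projc_proj[OF X, of m0]
        by (simp add: algebra_simps matrix_vector_mult_scaleR)
      then show "(norm (?M *v (F x - m0)))\<^sup>2 = (1 + c)\<^sup>2 * (norm (?M *v (x - m0)))\<^sup>2"
        using c0 by (simp add: power_mult_distrib)
    qed
    also have "\<dots> = (1 + c)\<^sup>2 * V" unfolding V_def by simp
    also have "\<dots> = (sqrt V + c * sqrt V)\<^sup>2" using Vp by (simp add: power_mult_distrib algebra_simps power2_eq_square)
    finally show ?thesis using cV by simp
  qed
  show ?thesis using PQ2 W val unfolding V_def m0_def by blast
qed



lemma case_zero:
  fixes X :: "real^'r^'d" and P0 :: "(real^'d) measure"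
  assumes X: "X \<in> stiefel" and card: "CARD('r) < CARD('d)" and P0: "P0 \<in> Q2" and r: "\<rho> \<ge> 0"
    and V0: "(\<integral>x. (norm (projc X *v (x - mean P0)))\<^sup>2 \<partial>P0) = 0"
  shows "\<exists>P \<in> Q2. W2 P P0 \<le> \<rho> \<and> (\<integral>x. (norm (projc X *v (x - mean P)))\<^sup>2 \<partial>P)
          = (sqrt (\<integral>x. (norm (projc X *v (x - mean P0)))\<^sup>2 \<partial>P0) + \<rho>)\<^sup>2"
proof -
  let ?M = "projc X"
  define m0 where "m0 = mean P0"
  obtain u where u: "norm u = 1" "?M *v u = u" using projc_fixed_unit[OF X card] by blast
  define B where "B = measure_pmf (bernoulli_pmf (1/2))"
  have Bp: "prob_space B" unfolding B_def by (rule prob_space_measure_pmf)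
  have P0p: "prob_space P0" using Q2D[OF P0] by simp
  have sP[measurable_cong]: "sets P0 = sets borel" using Q2D[OF P0] by simp
  have sB[measurable_cong]: "sets B = sets (count_space UNIV)" unfolding B_def by simp
  interpret p0: prob_space P0 by fact
  interpret pb: prob_space B by fact
  interpret pair_sigma_finite P0 B by unfold_locales
  let ?\<Omega> = "P0 \<Otimes>\<^sub>M B"
  have Op: "prob_space ?\<Omega>" by (rule prob_space_pair) unfold_locales
  have "measurable ?\<Omega> P0 = measurable ?\<Omega> borel" by (rule measurable_cong_sets) (simp_all add: sP)
  then have fm[measurable]: "fst \<in> borel_measurable ?\<Omega>" using measurable_fst by metis
  have snm[measurable]: "snd \<in> measurable ?\<Omega> B" by simp
  define sg where "sg = (\<lambda>b::bool. if b then \<rho> else - \<rho>)"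
  have sgm[measurable]: "(\<lambda>b. sg b *\<^sub>R u) \<in> borel_measurable B"
    by (simp add: measurable_cong_sets[OF sB refl])
  have sgm2: "sg \<in> borel_measurable B"
    by (simp add: measurable_cong_sets[OF sB refl])
  have dfst: "distr ?\<Omega> borel fst = P0"
  proof -
    have "distr ?\<Omega> borel fst = distr ?\<Omega> P0 fst" by (rule distr_cong[OF refl]) (simp_all add: sP)
    also have "\<dots> = P0" by (rule pb.distr_pair_fst)
    finally show ?thesis .
  qed
  have dsnd: "distr ?\<Omega> B snd = B" by (rule distr_snd_pair[OF P0p Bp])
  have Pi: "integrable P0 (\<lambda>x. (norm x)\<^sup>2)" using Q2D[OF P0] by simp
  have fi: "integrable ?\<Omega> (\<lambda>\<omega>. (norm (fst \<omega>))\<^sup>2)"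
    using Pi dfst integrable_distr_eq[OF fm, of "\<lambda>x. (norm x)\<^sup>2"] by simp
  define F where "F = (\<lambda>\<omega>::(real^'d) \<times> bool. fst \<omega> + sg (snd \<omega>) *\<^sub>R u)"
  have Fm[measurable]: "F \<in> borel_measurable ?\<Omega>"
    unfolding F_def by (intro borel_measurable_add fm measurable_compose[OF snm sgm])
  have nsg: "\<bar>sg b\<bar> = \<rho>" for b using r by (simp add: sg_def)
  have Fi: "integrable ?\<Omega> (\<lambda>\<omega>. (norm (F \<omega>))\<^sup>2)"
  proof (rule sq_int_bound[OF Op fi, where a=1 and b="\<rho>"])
    fix \<omega> :: "(real^'d) \<times> bool"
    have "norm (F \<omega>) \<le> norm (fst \<omega>) + norm (sg (snd \<omega>) *\<^sub>R u)" unfolding F_def by (rule norm_triangle_ineq)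
    then show "norm (F \<omega>) \<le> 1 * norm (fst \<omega>) + \<rho>" using nsg u by simp
  qed auto
  define P where "P = distr ?\<Omega> borel F"
  have PQ2: "P \<in> Q2" unfolding P_def by (rule distr_Q2[OF Op Fm Fi])
  have cpl: "distr ?\<Omega> borel (\<lambda>\<omega>. (F \<omega>, fst \<omega>)) \<in> couplings P P0"
    using coupling_distr(1)[OF Op Fm fm] unfolding P_def dfst .
  have cost: "(\<integral>z. (norm (fst z - snd z))\<^sup>2 \<partial>distr ?\<Omega> borel (\<lambda>\<omega>. (F \<omega>, fst \<omega>))) = \<rho>\<^sup>2"
  proof -
    have "(\<integral>z. (norm (fst z - snd z))\<^sup>2 \<partial>distr ?\<Omega> borel (\<lambda>\<omega>. (F \<omega>, fst \<omega>)))
          = (\<integral>\<omega>. (norm (F \<omega> - fst \<omega>))\<^sup>2 \<partial>?\<Omega>)"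
      by (rule coupling_distr(2)[OF Op Fm fm])
    also have "\<dots> = (\<integral>\<omega>. \<rho>\<^sup>2 \<partial>?\<Omega>)"
      by (rule Bochner_Integration.integral_cong[OF refl]) (simp add: F_def nsg u power2_abs)
    also have "\<dots> = \<rho>\<^sup>2" using prob_space.prob_space[OF Op] by simp
    finally show ?thesis .
  qed
  have W: "W2 P P0 \<le> \<rho>" using W2_le[OF cpl] cost r by simp
  have isg: "(\<integral>\<omega>. sg (snd \<omega>) \<partial>?\<Omega>) = 0"
  proof -
    have "(\<integral>\<omega>. sg (snd \<omega>) \<partial>?\<Omega>) = (\<integral>b. sg b \<partial>distr ?\<Omega> B snd)"
      by (rule integral_distr[OF snm sgm2, symmetric])
    also have "\<dots> = (\<integral>b. sg b \<partial>B)" unfolding dsnd ..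
    also have "\<dots> = 0" unfolding B_def by (simp add: sg_def)
    finally show ?thesis .
  qed
  have mP: "mean P = m0"
  proof -
    have xi: "integrable ?\<Omega> fst" by (rule int_of_sq[OF Op fi]) simp
    have si: "integrable ?\<Omega> (\<lambda>\<omega>. sg (snd \<omega>))"
    proof -
      have "integrable B sg" by (rule pb.integrable_const_bound[where B=\<rho>]) (auto simp: nsg sgm2)
      then show ?thesis using integrable_distr_eq[OF snm sgm2] dsnd by simp
    qed
    have mf: "(\<integral>\<omega>. fst \<omega> \<partial>?\<Omega>) = m0"
    proof -
      have "(\<integral>\<omega>. fst \<omega> \<partial>?\<Omega>) = (\<integral>x. x \<partial>distr ?\<Omega> borel fst)"
        by (rule integral_distr[OF fm, symmetric]) simp
      then show ?thesis unfolding dfst m0_def mean_def by simp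
    qed
    have "mean P = (\<integral>\<omega>. F \<omega> \<partial>?\<Omega>)" unfolding mean_def P_def
      by (rule integral_distr[OF Fm]) simp
    also have "\<dots> = (\<integral>\<omega>. fst \<omega> \<partial>?\<Omega>) + (\<integral>\<omega>. sg (snd \<omega>) \<partial>?\<Omega>) *\<^sub>R u"
      unfolding F_def using xi si by simp
    also have "\<dots> = m0" using mf isg by simp
    finally show ?thesis .
  qed
  have vi: "integrable P0 (\<lambda>x. (norm (?M *v (x - m0)))\<^sup>2)"
  proof (rule sq_int_bound[OF P0p Pi, where a=1 and b="norm m0"])
    fix x :: "real^'d"
    show "norm (?M *v (x - m0)) \<le> 1 * norm x + norm m0"
      using norm_projc_le[OF X, of "x - m0"] norm_triangle_ineq4[of x m0] by simp
  qed auto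
  have "AE x in P0. (norm (?M *v (x - m0)))\<^sup>2 = 0"
    using integral_nonneg_eq_0_iff_AE[OF vi] V0 unfolding m0_def by auto
  then have ae0: "AE x in P0. ?M *v (x - m0) = 0" by simp
  have ae: "AE \<omega> in ?\<Omega>. ?M *v (fst \<omega> - m0) = 0"
  proof -
    have "AE x in distr ?\<Omega> borel fst. ?M *v (x - m0) = 0" using ae0 unfolding dfst .
    then show ?thesis by (subst (asm) AE_distr_iff[OF fm]) auto
  qed
  have val: "(\<integral>x. (norm (?M *v (x - mean P)))\<^sup>2 \<partial>P) = \<rho>\<^sup>2"
  proof -
    have "(\<integral>x. (norm (?M *v (x - mean P)))\<^sup>2 \<partial>P) = (\<integral>\<omega>. (norm (?M *v (F \<omega> - m0)))\<^sup>2 \<partial>?\<Omega>)"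
      unfolding mP unfolding P_def by (rule integral_distr[OF Fm]) simp
    also have "\<dots> = (\<integral>\<omega>. \<rho>\<^sup>2 \<partial>?\<Omega>)"
    proof (rule integral_cong_AE)
      show "AE \<omega> in ?\<Omega>. (norm (?M *v (F \<omega> - m0)))\<^sup>2 = \<rho>\<^sup>2"
        using ae
      proof (rule AE_mp, intro AE_I2 impI)
        fix \<omega> :: "(real^'d) \<times> bool"
        assume h: "?M *v (fst \<omega> - m0) = 0"
        have "?M *v (F \<omega> - m0) = ?M *v (fst \<omega> - m0) + sg (snd \<omega>) *\<^sub>R (?M *v u)"
          unfolding F_def by (simp add: algebra_simps matrix_vector_mult_scaleR)
        also have "\<dots> = sg (snd \<omega>) *\<^sub>R u" using h u by simp
        finally show "(norm (?M *v (F \<omega> - m0)))\<^sup>2 = \<rho>\<^sup>2" using nsg u by (simp add: power2_abs)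
      qed
    qed auto
    also have "\<dots> = \<rho>\<^sup>2" using prob_space.prob_space[OF Op] by simp
    finally show ?thesis .
  qed
  show ?thesis using PQ2 W val V0 by auto
qed



lemma trace_formula:
  fixes X :: "real^'r^'d" and P0 :: "(real^'d) measure"
  assumes X: "X \<in> stiefel" and P0: "P0 \<in> Q2"
  shows "trace (projc X ** covariance P0) = (\<integral>x. (norm (projc X *v (x - mean P0)))\<^sup>2 \<partial>P0)"
proof -
  let ?M = "projc X"
  define m where "m = mean P0"
  have P0p: "prob_space P0" using Q2D[OF P0] by simp
  have sP[measurable_cong]: "sets P0 = sets borel" using Q2D[OF P0] by simp
  have Pi: "integrable P0 (\<lambda>x. (norm x)\<^sup>2)" using Q2D[OF P0] by simp
  have wi: "integrable P0 (\<lambda>x. (norm (x - m))\<^sup>2)" by (rule sq_int_shift[OF P0p _ Pi]) simp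
  have pi: "integrable P0 (\<lambda>x. (x$j - m$j) * (x$i - m$i))" for i j
  proof (rule Bochner_Integration.integrable_bound[OF wi])
    show "(\<lambda>x. (x$j - m$j) * (x$i - m$i)) \<in> borel_measurable P0" by measurable
    show "AE x in P0. norm ((x$j - m$j) * (x$i - m$i)) \<le> norm ((norm (x - m))\<^sup>2)"
    proof (rule AE_I2)
      fix x :: "real^'d"
      have a: "\<bar>x$j - m$j\<bar> \<le> norm (x - m)" using component_le_norm_cart[of "x - m" j] by simp
      have b: "\<bar>x$i - m$i\<bar> \<le> norm (x - m)" using component_le_norm_cart[of "x - m" i] by simp
      have "\<bar>x$j - m$j\<bar> * \<bar>x$i - m$i\<bar> \<le> norm (x - m) * norm (x - m)"
        using a b by (intro mult_mono) auto
      then show "norm ((x$j - m$j) * (x$i - m$i)) \<le> norm ((norm (x - m))\<^sup>2)"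
        by (simp add: abs_mult power2_eq_square)
    qed
  qed
  have pt: "(norm (?M *v (x - m)))\<^sup>2 = (\<Sum>i\<in>UNIV. \<Sum>j\<in>UNIV. ?M$i$j * ((x$j - m$j) * (x$i - m$i)))" for x
  proof -
    have "(norm (?M *v (x - m)))\<^sup>2 = (x - m) \<bullet> (?M *v (x - m))" by (rule norm_projc_sq[OF X])
    also have "\<dots> = (\<Sum>i\<in>UNIV. (x$i - m$i) * (\<Sum>j\<in>UNIV. ?M$i$j * (x$j - m$j)))"
      by (simp add: inner_vec_def matrix_vector_mult_def)
    also have "\<dots> = (\<Sum>i\<in>UNIV. \<Sum>j\<in>UNIV. ?M$i$j * ((x$j - m$j) * (x$i - m$i)))"
      by (simp add: sum_distrib_left algebra_simps)
    finally show ?thesis .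
  qed
  have "(\<integral>x. (norm (?M *v (x - m)))\<^sup>2 \<partial>P0)
        = (\<integral>x. (\<Sum>i\<in>UNIV. \<Sum>j\<in>UNIV. ?M$i$j * ((x$j - m$j) * (x$i - m$i))) \<partial>P0)"
    by (simp add: pt)
  also have "\<dots> = (\<Sum>i\<in>UNIV. \<Sum>j\<in>UNIV. ?M$i$j * (\<integral>x. (x$j - m$j) * (x$i - m$i) \<partial>P0))"
    using pi by (simp add: Bochner_Integration.integral_sum)
  also have "\<dots> = trace (?M ** covariance P0)"
    by (simp add: trace_def matrix_matrix_mult_def covariance_def m_def)
  finally show ?thesis unfolding m_def by simp
qed



lemma phi_formula:
  fixes X :: "real^'r^'d" and P0 :: "(real^'d) measure"
  assumes X: "X \<in> stiefel" and card: "CARD('r) < CARD('d)" and P0: "P0 \<in> Q2" and r: "\<rho> \<ge> 0"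
  shows "phi \<rho> P0 X = (sqrt (trace (projc X ** covariance P0)) + \<rho>)\<^sup>2"
proof -
  define V where "V = (\<integral>x. (norm (projc X *v (x - mean P0)))\<^sup>2 \<partial>P0)"
  have V0: "V \<ge> 0" unfolding V_def by (rule integral_nonneg_AE) auto
  let ?S = "{(\<integral>\<xi>. (norm (projc X *v (\<xi> - mean P)))\<^sup>2 \<partial>P) | P. P \<in> Q2 \<and> W2 P P0 \<le> \<rho>}"
  have ex: "\<exists>P \<in> Q2. W2 P P0 \<le> \<rho> \<and> (\<integral>x. (norm (projc X *v (x - mean P)))\<^sup>2 \<partial>P) = (sqrt V + \<rho>)\<^sup>2"
  proof (cases "V > 0")
    case True then show ?thesis unfolding V_def using case_pos[OF X P0 r] by blast
  next
    case False then have "V = 0" using V0 by simp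
    then show ?thesis unfolding V_def using case_zero[OF X card P0 r] by blast
  qed
  have "Sup ?S = (sqrt V + \<rho>)\<^sup>2"
  proof (rule cSup_eq_maximum)
    show "(sqrt V + \<rho>)\<^sup>2 \<in> ?S" using ex by (smt (verit) mem_Collect_eq)
    fix y assume "y \<in> ?S"
    then obtain P where "P \<in> Q2" "W2 P P0 \<le> \<rho>" "y = (\<integral>\<xi>. (norm (projc X *v (\<xi> - mean P)))\<^sup>2 \<partial>P)"
      by blast
    then show "y \<le> (sqrt V + \<rho>)\<^sup>2" unfolding V_def using value_upper[OF X P0 _ _ r] by blast
  qed
  then show ?thesis unfolding phi_def projc_def[symmetric] trace_formula[OF X P0] V_def .
qed

theorem mainTheorem6:
  fixes \<rho> :: real and P0 :: "(real^'d) measure"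
  assumes "CARD('r) < CARD('d)"
    and "\<rho> \<ge> 0"
    and "P0 \<in> Q2"
  shows "{X \<in> (stiefel :: (real^'r^'d) set). \<forall>Y \<in> (stiefel :: (real^'r^'d) set). phi \<rho> P0 X \<le> phi \<rho> P0 Y}
       = {X \<in> (stiefel :: (real^'r^'d) set). \<forall>Y \<in> (stiefel :: (real^'r^'d) set).
            trace ((mat 1 - X ** transpose X) ** covariance P0)
              \<le> trace ((mat 1 - Y ** transpose Y) ** covariance P0)}"
proof -
  have tnn: "trace (projc X ** covariance P0) \<ge> 0" if "X \<in> (stiefel :: (real^'r^'d) set)" for X
    unfolding trace_formula[OF that assms(3)] by (rule integral_nonneg_AE) auto
  have key: "phi \<rho> P0 X \<le> phi \<rho> P0 Y \<longleftrightarrow>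
      trace (projc X ** covariance P0) \<le> trace (projc Y ** covariance P0)"
    if "X \<in> (stiefel :: (real^'r^'d) set)" "Y \<in> (stiefel :: (real^'r^'d) set)" for X Y
  proof -
    let ?a = "trace (projc X ** covariance P0)" and ?b = "trace (projc Y ** covariance P0)"
    have "phi \<rho> P0 X \<le> phi \<rho> P0 Y \<longleftrightarrow> (sqrt ?a + \<rho>)\<^sup>2 \<le> (sqrt ?b + \<rho>)\<^sup>2"
      using phi_formula[OF that(1) assms(1,3,2)] phi_formula[OF that(2) assms(1,3,2)] by simp
    also have "\<dots> \<longleftrightarrow> sqrt ?a + \<rho> \<le> sqrt ?b + \<rho>"
      using assms(2) tnn[OF that(1)] tnn[OF that(2)] by (intro power_mono_iff) auto
    also have "\<dots> \<longleftrightarrow> ?a \<le> ?b" by simp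
    finally show ?thesis .
  qed
  show ?thesis unfolding projc_def[symmetric] using key by blast
qed

end
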